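(* Let $V\subset A_N$ be a maximal totally singular subspace. Then $f_V\in\mathbb C[A_N]^{SL(2,\mathbb Z)}$, and $f_V$ is, up to a constant multiple, the unique vector of $\mathbb C[A_N]$ on which every transvection $t_\alpha$ with $\alpha\in V$, $q_N(\alpha)=1$, acts as $-1$.
   Context: $N=U\oplus U(2)\oplus D_4\oplus D_4$ ($U$ hyperbolic plane, $D_4$ negative definite, $U(2)$ doubled form); $A_N=N^*/N\cong\mathbb F_2^6$ with $q_N(x)=\langle x,x\rangle\bmod2\mathbb Z\in\mathbb Z/2\mathbb Z$, bilinear form $b_N(x,y)=2\langle x,y\rangle\bmod2$; $(A_N,q_N)\cong u^{\oplus3}$ with $u$ the hyperbolic plane over $\mathbb F_2$. Weil representation on $\mathbb C[A_N]$ (basis $e_\alpha$): $Te_\alpha=(-1)^{q_N(\alpha)}e_\alpha$, $Se_\alpha=\frac18\sum_\beta(-1)^{b_N(\beta,\alpha)}e_\beta$ for $T=\begin{pmatrix}1&1\\0&1\end{pmatrix}$, $S=\begin{pmatrix}0&-1\\1&0\end{pmatrix}$. $O(q_N)$ acts on $\mathbb C[A_N]$ by $g(e_\alpha)=e_{g(\alpha)}$. For $\alpha$ with $q_N(\alpha)=1$ the transvection is $t_\alpha(x)=x+b_N(x,\alpha)\alpha\in O(q_N)$. A 3-dimensional subspace $V\subset A_N$ is maximal totally singular if $(V,q_N|_V)\cong(\mathbb F_2^3,\ x\mapsto x_1+x_2+x_3)$. For such $V$, $I=\ker(q_N|_V)$ is a 2-dimensional totally isotropic subspace, contained in exactly two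 maximal (3-dimensional) totally isotropic subspaces $I^+,I^-$, and $f_V:=\sum_{\alpha\in I^+}e_\alpha-\sum_{\alpha\in I^-}e_\alpha$ (defined up to sign). *)

theory Defs
  imports Complex_Main
begin

text \<open>Model of the discriminant form (A_N, q_N) = u^3 over F_2.
  Vectors of F_2^n are functions nat => bool supported on {0..<n}; True = 1.\<close>

definition F2vec :: "nat \<Rightarrow> (nat \<Rightarrow> bool) set" where
  "F2vec n = {x. \<forall>i. n \<le> i \<longrightarrow> \<not> x i}"

definition AN :: "(nat \<Rightarrow> bool) set" where
  "AN = F2vec 6"

definition vadd :: "(nat \<Rightarrow> bool) \<Rightarrow> (nat \<Rightarrow> bool) \<Rightarrow> (nat \<Rightarrow> bool)" where
  "vadd x y = (\<lambda>i. x i \<noteq> y i)"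

definition qN :: "(nat \<Rightarrow> bool) \<Rightarrow> bool" where
  "qN x = (((x 0 \<and> x 1) \<noteq> (x 2 \<and> x 3)) \<noteq> (x 4 \<and> x 5))"

definition bN :: "(nat \<Rightarrow> bool) \<Rightarrow> (nat \<Rightarrow> bool) \<Rightarrow> bool" where
  "bN x y = ((qN (vadd x y) \<noteq> qN x) \<noteq> qN y)"

definition sgn2 :: "bool \<Rightarrow> complex" where
  "sgn2 b = (if b then -1 else 1)"

text \<open>C[A_N]: a vector f has coefficient f alpha at e_alpha; zero outside A_N.\<close>
definition CA :: "((nat \<Rightarrow> bool) \<Rightarrow> complex) set" where
  "CA = {f. \<forall>x. x \<notin> AN \<longrightarrow> f x = 0}"

definition weilT :: "((nat \<Rightarrow> bool) \<Rightarrow> complex) \<Rightarrow> ((nat \<Rightarrow> bool) \<Rightarrow> complex)" where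
  "weilT f = (\<lambda>b. if b \<in> AN then sgn2 (qN b) * f b else 0)"

definition weilS :: "((nat \<Rightarrow> bool) \<Rightarrow> complex) \<Rightarrow> ((nat \<Rightarrow> bool) \<Rightarrow> complex)" where
  "weilS f = (\<lambda>b. if b \<in> AN then (1/8) * (\<Sum>a\<in>AN. sgn2 (bN b a) * f a) else 0)"

text \<open>The image of SL(2,Z) under the Weil representation: the group generated by
  the images of the generators S, T (a monoid suffices as both have finite order).\<close>
inductive_set weil_image :: "(((nat \<Rightarrow> bool) \<Rightarrow> complex) \<Rightarrow> ((nat \<Rightarrow> bool) \<Rightarrow> complex)) set" where
  id_in: "id \<in> weil_image"
| S_in: "g \<in> weil_image \<Longrightarrow> weilS \<circ> g \<in> weil_image"
| T_in: "g \<in> weil_image \<Longrightarrow> weilT \<circ> g \<in> weil_image"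

definition SL2Z_invariant :: "((nat \<Rightarrow> bool) \<Rightarrow> complex) \<Rightarrow> bool" where
  "SL2Z_invariant f = (f \<in> CA \<and> (\<forall>g\<in>weil_image. g f = f))"

text \<open>Permutation action of g in O(q_N): g(e_a) = e_{g(a)}.\<close>
definition perm_act :: "((nat \<Rightarrow> bool) \<Rightarrow> (nat \<Rightarrow> bool)) \<Rightarrow> ((nat \<Rightarrow> bool) \<Rightarrow> complex) \<Rightarrow> ((nat \<Rightarrow> bool) \<Rightarrow> complex)" where
  "perm_act g f = (\<lambda>b. if b \<in> AN then f (the_inv_into AN g b) else 0)"

definition transvection :: "(nat \<Rightarrow> bool) \<Rightarrow> (nat \<Rightarrow> bool) \<Rightarrow> (nat \<Rightarrow> bool)" where
  "transvection a x = (if bN x a then vadd x a else x)"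

definition max_tot_singular :: "(nat \<Rightarrow> bool) set \<Rightarrow> bool" where
  "max_tot_singular V = (V \<subseteq> AN \<and>
     (\<exists>\<phi>. bij_betw \<phi> (F2vec 3) V \<and>
        (\<forall>x\<in>F2vec 3. \<forall>y\<in>F2vec 3. \<phi> (vadd x y) = vadd (\<phi> x) (\<phi> y)) \<and>
        (\<forall>x\<in>F2vec 3. qN (\<phi> x) = ((x 0 \<noteq> x 1) \<noteq> x 2))))"

definition is_subspace :: "(nat \<Rightarrow> bool) set \<Rightarrow> bool" where
  "is_subspace W = (W \<subseteq> AN \<and> (\<lambda>i. False) \<in> W \<and> (\<forall>x\<in>W. \<forall>y\<in>W. vadd x y \<in> W))"

definition max_tot_isotropic :: "(nat \<Rightarrow> bool) set \<Rightarrow> bool" where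
  "max_tot_isotropic W = (is_subspace W \<and> card W = 8 \<and> (\<forall>x\<in>W. \<not> qN x))"

definition indic :: "(nat \<Rightarrow> bool) set \<Rightarrow> ((nat \<Rightarrow> bool) \<Rightarrow> complex)" where
  "indic W = (\<lambda>x. if x \<in> W then 1 else 0)"

text \<open>f_V = sum_{a in I+} e_a - sum_{a in I-} e_a.\<close>
definition fV :: "(nat \<Rightarrow> bool) set \<Rightarrow> (nat \<Rightarrow> bool) set \<Rightarrow> ((nat \<Rightarrow> bool) \<Rightarrow> complex)" where
  "fV Wp Wm = (\<lambda>x. indic Wp x - indic Wm x)"

definition acts_as_minus_one :: "(nat \<Rightarrow> bool) set \<Rightarrow> ((nat \<Rightarrow> bool) \<Rightarrow> complex) \<Rightarrow> bool" where
  "acts_as_minus_one V f = (\<forall>a\<in>V. qN a \<longrightarrow> perm_act (transvection a) f = (\<lambda>x. - f x))"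

end

theory Submission
  imports Defs
begin


definition zv :: "nat \<Rightarrow> bool" where "zv = (\<lambda>i. False)"

lemma vadd_assoc: "vadd x (vadd y w) = vadd (vadd x y) w"
  unfolding vadd_def by auto
lemma vadd_comm: "vadd x y = vadd y x"
  unfolding vadd_def by auto
lemma vadd_self[simp]: "vadd x x = zv"
  unfolding vadd_def zv_def by auto
lemma vadd_zv[simp]: "vadd x zv = x" "vadd zv x = x"
  unfolding vadd_def zv_def by auto
lemma vadd_cancel[simp]: "vadd x (vadd x y) = y" "vadd (vadd y x) x = y"
  unfolding vadd_def by auto
lemma vadd_eq_zv: "vadd x y = zv \<longleftrightarrow> x = y"
  unfolding vadd_def zv_def by (auto simp: fun_eq_iff)

lemma bN_expl: "bN x y = ((((x 0 \<and> y 1) \<noteq> (x 1 \<and> y 0)) \<noteq> ((x 2 \<and> y 3) \<noteq> (x 3 \<and> y 2)))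
    \<noteq> ((x 4 \<and> y 5) \<noteq> (x 5 \<and> y 4)))"
  unfolding bN_def qN_def vadd_def by auto

lemma bN_add: "bN (vadd x y) w = (bN x w \<noteq> bN y w)"
  by (simp only: bN_expl vadd_def) argo
lemma bN_sym: "bN x y = bN y x"
  by (simp only: bN_expl) argo
lemma bN_add2: "bN w (vadd x y) = (bN w x \<noteq> bN w y)"
  using bN_add bN_sym by metis
lemma bN_self[simp]: "bN x x = False"
  by (simp only: bN_expl) argo
lemma bN_zv[simp]: "bN zv x = False" "bN x zv = False"
  unfolding bN_expl zv_def by auto
lemma qN_zv[simp]: "qN zv = False"
  unfolding qN_def zv_def by auto
lemma qN_add: "qN (vadd x y) = ((qN x \<noteq> qN y) \<noteq> bN x y)"
  unfolding bN_def by auto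

lemma AN_add: "x \<in> AN \<Longrightarrow> y \<in> AN \<Longrightarrow> vadd x y \<in> AN"
  unfolding AN_def F2vec_def vadd_def by auto
lemma AN_zv: "zv \<in> AN"
  unfolding AN_def F2vec_def zv_def by auto

lemma F2vec_bij: "bij_betw (\<lambda>S i. i \<in> S) (Pow {0..<n}) (F2vec n)"
  by (rule bij_betw_byWitness[where f' = "\<lambda>x. {i. x i}"])
     (auto simp: F2vec_def not_le[symmetric])

lemma card_F2vec: "card (F2vec n) = 2 ^ n" and finite_F2vec: "finite (F2vec n)"
  using bij_betw_same_card[OF F2vec_bij, of n] bij_betw_finite[OF F2vec_bij, of n]
  by (auto simp: card_Pow)

lemma card_AN: "card AN = 64" and finite_AN: "finite AN"
  unfolding AN_def using card_F2vec[of 6] finite_F2vec[of 6] by auto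

lemma nondeg: assumes "b \<in> AN" "b \<noteq> zv" shows "\<exists>a\<in>AN. bN b a"
proof -
  obtain i where i: "b i" using assms(2) unfolding zv_def by auto
  have "i < 6"
  proof (rule ccontr)
    assume "\<not> i < 6" thus False using assms(1) i unfolding AN_def F2vec_def by auto
  qed
  hence "i = 0 \<or> i = 1 \<or> i = 2 \<or> i = 3 \<or> i = 4 \<or> i = 5" by auto
  then show ?thesis
  proof (elim disjE)
    assume "i = 0" thus ?thesis using i
      by (intro bexI[of _ "\<lambda>j. j = 1"]) (auto simp: bN_expl AN_def F2vec_def)
  next
    assume "i = 1" thus ?thesis using i
      by (intro bexI[of _ "\<lambda>j. j = 0"]) (auto simp: bN_expl AN_def F2vec_def)
  next
    assume "i = 2" thus ?thesis using i
      by (intro bexI[of _ "\<lambda>j. j = 3"]) (auto simp: bN_expl AN_def F2vec_def)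
  next
    assume "i = 3" thus ?thesis using i
      by (intro bexI[of _ "\<lambda>j. j = 2"]) (auto simp: bN_expl AN_def F2vec_def)
  next
    assume "i = 4" thus ?thesis using i
      by (intro bexI[of _ "\<lambda>j. j = 5"]) (auto simp: bN_expl AN_def F2vec_def)
  next
    assume "i = 5" thus ?thesis using i
      by (intro bexI[of _ "\<lambda>j. j = 4"]) (auto simp: bN_expl AN_def F2vec_def)
  qed
qed




definition perp :: "(nat \<Rightarrow> bool) set \<Rightarrow> (nat \<Rightarrow> bool) set" where
  "perp W = {b \<in> AN. \<forall>a\<in>W. \<not> bN b a}"

lemma sub_finite: "is_subspace W \<Longrightarrow> finite W"
  unfolding is_subspace_def using finite_AN finite_subset by blast

lemma sub_zv: "is_subspace W \<Longrightarrow> zv \<in> W"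
  unfolding is_subspace_def zv_def by auto

lemma sub_add: "is_subspace W \<Longrightarrow> x \<in> W \<Longrightarrow> y \<in> W \<Longrightarrow> vadd x y \<in> W"
  unfolding is_subspace_def by auto

lemma sub_AN: "is_subspace W \<Longrightarrow> W \<subseteq> AN"
  unfolding is_subspace_def by auto

lemma AN_sub: "is_subspace AN"
  unfolding is_subspace_def using AN_add AN_zv by (auto simp: zv_def)

lemma halving:
  assumes W: "is_subspace W" and a0: "a0 \<in> W" and b: "bN b a0"
  shows "(\<Sum>a\<in>W. sgn2 (bN b a)) = 0"
proof -
  have bij: "bij_betw (\<lambda>a. vadd a a0) W W"
    by (rule bij_betw_byWitness[where f' = "\<lambda>a. vadd a a0"]) (auto intro: sub_add[OF W] a0)
  have "(\<Sum>a\<in>W. sgn2 (bN b a)) = (\<Sum>a\<in>W. sgn2 (bN b (vadd a a0)))"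
    using sum.reindex_bij_betw[OF bij, of "\<lambda>a. sgn2 (bN b a)"] by simp
  also have "\<dots> = (\<Sum>a\<in>W. - sgn2 (bN b a))"
    using b by (intro sum.cong) (auto simp: bN_add2 sgn2_def)
  also have "\<dots> = - (\<Sum>a\<in>W. sgn2 (bN b a))" by (simp add: sum_negf)
  finally show ?thesis by simp
qed

lemma charsum:
  assumes W: "is_subspace W"
  shows "(\<Sum>a\<in>W. sgn2 (bN b a)) = (if \<forall>a\<in>W. \<not> bN b a then of_nat (card W) else 0)"
proof (cases "\<forall>a\<in>W. \<not> bN b a")
  case True
  then show ?thesis by (simp add: sgn2_def)
next
  case False
  then show ?thesis using halving[OF W] by auto
qed

lemma perp_card:
  assumes W: "is_subspace W"
  shows "card W * card (perp W) = 64"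
proof -
  have fW: "finite W" using sub_finite[OF W] .
  have "(\<Sum>b\<in>AN. \<Sum>a\<in>W. sgn2 (bN b a)) = (\<Sum>b\<in>AN. if b \<in> perp W then of_nat (card W) else (0::complex))"
    using charsum[OF W] by (intro sum.cong) (auto simp: perp_def)
  also have "\<dots> = of_nat (card W) * of_nat (card (perp W))"
  proof -
    have "perp W \<subseteq> AN" by (auto simp: perp_def)
    hence "AN \<inter> perp W = perp W" by auto
    thus ?thesis using sum.inter_restrict[OF finite_AN, of "\<lambda>b. of_nat (card W) :: complex" "perp W", symmetric]
      by (simp add: mult.commute)
  qed
  finally have 1: "(\<Sum>b\<in>AN. \<Sum>a\<in>W. sgn2 (bN b a)) = of_nat (card W) * of_nat (card (perp W))" .
  have "(\<Sum>b\<in>AN. \<Sum>a\<in>W. sgn2 (bN b a)) = (\<Sum>a\<in>W. \<Sum>b\<in>AN. sgn2 (bN a b))"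
    by (subst sum.swap) (simp add: bN_sym)
  also have "\<dots> = (\<Sum>a\<in>W. if a = zv then 64 else 0)"
  proof (intro sum.cong refl)
    fix a assume "a \<in> W"
    hence aA: "a \<in> AN" using sub_AN[OF W] by auto
    show "(\<Sum>b\<in>AN. sgn2 (bN a b)) = (if a = zv then 64 else 0)"
      using charsum[OF AN_sub, of a] nondeg[OF aA] card_AN by auto
  qed
  also have "\<dots> = 64" using sum.delta[OF fW, of zv "\<lambda>_. 64::complex"] sub_zv[OF W] by simp
  finally have "of_nat (card W * card (perp W)) = (of_nat 64 :: complex)" using 1 by simp
  thus ?thesis using of_nat_eq_iff by blast
qed

lemma iso_bN: assumes "max_tot_isotropic W" "x \<in> W" "y \<in> W" shows "\<not> bN x y"
  using assms unfolding max_tot_isotropic_def is_subspace_def bN_def by auto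

lemma iso_perp: assumes W: "max_tot_isotropic W" shows "perp W = W"
proof -
  have S: "is_subspace W" and c: "card W = 8" using W unfolding max_tot_isotropic_def by auto
  have sub: "W \<subseteq> perp W" using iso_bN[OF W] sub_AN[OF S] unfolding perp_def by auto
  have "card (perp W) = 8" using perp_card[OF S] c by simp
  moreover have "finite (perp W)" using finite_AN by (auto simp: perp_def intro: finite_subset)
  ultimately show ?thesis using card_subset_eq[OF _ sub] c by simp
qed

lemma perp_sub: "is_subspace (perp W)"
  unfolding is_subspace_def perp_def using AN_add AN_zv by (auto simp: bN_add zv_def[symmetric])

lemma charsum_indic:
  assumes W: "max_tot_isotropic W"
  shows "weilS (indic W) = indic W"
proof
  fix b
  have S: "is_subspace W" using W unfolding max_tot_isotropic_def by auto
  have c: "card W = 8" using W unfolding max_tot_isotropic_def by auto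
  show "weilS (indic W) b = indic W b"
  proof (cases "b \<in> AN")
    case False then show ?thesis using sub_AN[OF S] by (auto simp: weilS_def indic_def)
  next
    case True
    have "(\<Sum>a\<in>AN. sgn2 (bN b a) * indic W a) = (\<Sum>a\<in>AN \<inter> W. sgn2 (bN b a))"
      by (subst sum.inter_restrict[OF finite_AN]) (auto simp: indic_def intro: sum.cong)
    also have "AN \<inter> W = W" using sub_AN[OF S] by auto
    finally have "(\<Sum>a\<in>AN. sgn2 (bN b a) * indic W a) = (if b \<in> perp W then 8 else 0)"
      using charsum[OF S, of b] True c by (simp add: perp_def)
    then show ?thesis using True iso_perp[OF W] by (simp add: weilS_def indic_def)
  qed
qed




lemma F2vec_add: "x \<in> F2vec n \<Longrightarrow> y \<in> F2vec n \<Longrightarrow> vadd x y \<in> F2vec n"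
  unfolding F2vec_def vadd_def by auto

lemma V_props:
  assumes "max_tot_singular V"
  shows "is_subspace V" "\<forall>x\<in>V. \<forall>y\<in>V. \<not> bN x y" "card V = 8" "\<exists>a0\<in>V. qN a0"
proof -
  obtain \<phi> where VA: "V \<subseteq> AN" and bij: "bij_betw \<phi> (F2vec 3) V"
    and lin: "\<forall>x\<in>F2vec 3. \<forall>y\<in>F2vec 3. \<phi> (vadd x y) = vadd (\<phi> x) (\<phi> y)"
    and q: "\<forall>x\<in>F2vec 3. qN (\<phi> x) = ((x 0 \<noteq> x 1) \<noteq> x 2)"
    using assms unfolding max_tot_singular_def by auto
  have V: "V = \<phi> ` F2vec 3" using bij by (simp add: bij_betw_def)
  have z3: "zv \<in> F2vec 3" by (simp add: F2vec_def zv_def)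
  have "\<phi> zv = vadd (\<phi> zv) (\<phi> zv)" using lin z3 by (metis vadd_zv(1))
  hence "\<phi> zv = zv" by simp
  hence "zv \<in> V" using V z3 by (metis image_eqI)
  moreover have "\<forall>x\<in>V. \<forall>y\<in>V. vadd x y \<in> V"
  proof (intro ballI)
    fix x y assume "x \<in> V" "y \<in> V"
    then obtain u w where u: "u \<in> F2vec 3" "x = \<phi> u" and w: "w \<in> F2vec 3" "y = \<phi> w" using V by auto
    have "vadd x y = \<phi> (vadd u w)" using lin u w by simp
    thus "vadd x y \<in> V" using V F2vec_add[OF u(1) w(1)] by simp
  qed
  ultimately show "is_subspace V" using VA unfolding is_subspace_def zv_def by auto
  show "\<forall>x\<in>V. \<forall>y\<in>V. \<not> bN x y"
  proof (intro ballI)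
    fix x y assume "x \<in> V" "y \<in> V"
    then obtain u w where u: "u \<in> F2vec 3" "x = \<phi> u" and w: "w \<in> F2vec 3" "y = \<phi> w" using V by auto
    have "qN (vadd x y) = qN (\<phi> (vadd u w))" using lin u w by simp
    also have "\<dots> = ((vadd u w 0 \<noteq> vadd u w 1) \<noteq> vadd u w 2)" using q F2vec_add[OF u(1) w(1)] by (rule bspec)
    finally have 1: "qN (vadd x y) = ((vadd u w 0 \<noteq> vadd u w 1) \<noteq> vadd u w 2)" .
    moreover have "qN x = ((u 0 \<noteq> u 1) \<noteq> u 2)" "qN y = ((w 0 \<noteq> w 1) \<noteq> w 2)" using q u w by auto
    ultimately show "\<not> bN x y" unfolding bN_def vadd_def by argo
  qed
  show "card V = 8" using bij_betw_same_card[OF bij] card_F2vec[of 3] by simp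
  have "(\<lambda>j. j = (0::nat)) \<in> F2vec 3" by (simp add: F2vec_def)
  moreover from this have "qN (\<phi> (\<lambda>j. j = 0))" using q by simp
  ultimately show "\<exists>a0\<in>V. qN a0" using V by blast
qed




lemma W_decomp:
  assumes IS: "is_subspace I" and cI: "card I = 4" and W: "max_tot_isotropic W"
    and IW: "I \<subseteq> W" and y: "y \<in> W" "y \<notin> I"
  shows "W = I \<union> vadd y ` I"
proof -
  have WS: "is_subspace W" and cW: "card W = 8" using W unfolding max_tot_isotropic_def by auto
  have fI: "finite I" using sub_finite[OF IS] .
  have sub: "I \<union> vadd y ` I \<subseteq> W" using IW y(1) sub_add[OF WS] by auto
  have disj: "I \<inter> vadd y ` I = {}"
  proof (rule ccontr)
    assume "I \<inter> vadd y ` I \<noteq> {}"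
    then obtain i where i: "i \<in> I" "vadd y i \<in> I" by auto
    have "vadd (vadd y i) i = y" by simp
    hence "y \<in> I" using sub_add[OF IS i(2) i(1)] by simp
    thus False using y(2) by simp
  qed
  have inj: "inj_on (vadd y) I" by (rule inj_onI) (metis vadd_cancel(1))
  have "card (I \<union> vadd y ` I) = 8"
    using card_Un_disjoint[OF fI _ disj] card_image[OF inj] fI cI by simp
  thus ?thesis using card_subset_eq[OF sub_finite[OF WS] sub] cW by simp
qed

lemma W_perpI:
  assumes W: "max_tot_isotropic W" and IW: "I \<subseteq> W"
  shows "W \<subseteq> perp I"
proof -
  have "W \<subseteq> AN" using W unfolding max_tot_isotropic_def is_subspace_def by auto
  thus ?thesis using iso_bN[OF W] IW unfolding perp_def by auto
qed

lemma iso_q: "max_tot_isotropic W \<Longrightarrow> x \<in> W \<Longrightarrow> \<not> qN x"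
  unfolding max_tot_isotropic_def by auto

lemma iso_S: "max_tot_isotropic W \<Longrightarrow> is_subspace W"
  unfolding max_tot_isotropic_def by auto

lemma iso_AN: "max_tot_isotropic W \<Longrightarrow> W \<subseteq> AN"
  unfolding max_tot_isotropic_def is_subspace_def by auto

lemma t_invol: "transvection a (transvection a x) = x"
  unfolding transvection_def by (auto simp: bN_add)

lemma t_AN: "a \<in> AN \<Longrightarrow> x \<in> AN \<Longrightarrow> transvection a x \<in> AN"
  unfolding transvection_def using AN_add by auto

lemma perm_t:
  assumes a: "a \<in> AN"
  shows "perm_act (transvection a) f = (\<lambda>x. if x \<in> AN then f (transvection a x) else 0)"
proof
  fix x
  have inj: "inj_on (transvection a) AN" by (rule inj_onI) (metis t_invol)
  show "perm_act (transvection a) f x = (if x \<in> AN then f (transvection a x) else 0)"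
  proof (cases "x \<in> AN")
    case True
    have "the_inv_into AN (transvection a) x = transvection a x"
      by (rule the_inv_into_f_eq[OF inj]) (auto simp: t_invol t_AN[OF a True])
    thus ?thesis using True by (simp add: perm_act_def)
  qed (simp add: perm_act_def)
qed

locale cfg =
  fixes V Wp Wm :: "(nat \<Rightarrow> bool) set"
  assumes V: "max_tot_singular V"
    and Wp: "max_tot_isotropic Wp" and Wm: "max_tot_isotropic Wm"
    and WpI: "{a\<in>V. \<not> qN a} \<subseteq> Wp" and WmI: "{a\<in>V. \<not> qN a} \<subseteq> Wm"
    and ne: "Wp \<noteq> Wm"
begin

definition "I = {a\<in>V. \<not> qN a}"
definition "a0 = (SOME a. a \<in> V \<and> qN a)"

lemma VS: "is_subspace V" and Vb: "x \<in> V \<Longrightarrow> y \<in> V \<Longrightarrow> \<not> bN x y" and cV: "card V = 8"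
  using V_props[OF V] by auto

lemma VAN: "V \<subseteq> AN" using VS unfolding is_subspace_def by auto

lemma a0: "a0 \<in> V" "qN a0"
proof -
  have "\<exists>a. a \<in> V \<and> qN a" using V_props(4)[OF V] by auto
  from someI_ex[OF this] show "a0 \<in> V" "qN a0" unfolding a0_def by auto
qed

lemma IW: "I \<subseteq> Wp" "I \<subseteq> Wm" using WpI WmI unfolding I_def by auto

lemma IS: "is_subspace I"
  unfolding is_subspace_def
proof (intro conjI ballI)
  show "I \<subseteq> AN" using VAN unfolding I_def by auto
  show "(\<lambda>i. False) \<in> I" using sub_zv[OF VS] unfolding I_def zv_def[symmetric] by simp
  fix x y assume "x \<in> I" "y \<in> I"
  thus "vadd x y \<in> I" using sub_add[OF VS] Vb unfolding I_def by (auto simp: qN_add)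
qed

lemma a0I: "i \<in> I \<Longrightarrow> vadd a0 i \<in> V \<and> qN (vadd a0 i)"
  using sub_add[OF VS a0(1)] a0 Vb[OF a0(1)] unfolding I_def by (auto simp: qN_add)

lemma VI: "V = I \<union> vadd a0 ` I"
proof
  show "I \<union> vadd a0 ` I \<subseteq> V" using a0I unfolding I_def by auto
  show "V \<subseteq> I \<union> vadd a0 ` I"
  proof
    fix a assume a: "a \<in> V"
    show "a \<in> I \<union> vadd a0 ` I"
    proof (cases "qN a")
      case True
      have "vadd a0 a \<in> I" using sub_add[OF VS a0(1) a] True a0 Vb[OF a0(1) a] unfolding I_def
        by (auto simp: qN_add)
      moreover have "a = vadd a0 (vadd a0 a)" by simp
      ultimately show ?thesis by blast
    qed (use a in \<open>auto simp: I_def\<close>)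
  qed
qed

lemma inj_a0: "inj_on (vadd a0) X" by (rule inj_onI) (metis vadd_cancel(1))

lemma disjA: "I \<inter> vadd a0 ` I = {}" using a0I unfolding I_def by auto

lemma cI: "card I = 4"
proof -
  have fI: "finite I" using sub_finite[OF IS] .
  have "card V = card I + card (vadd a0 ` I)" using VI card_Un_disjoint[OF fI _ disjA] fI by simp
  thus ?thesis using cV card_image[OF inj_a0] by simp
qed

lemma cPI: "card (perp I) = 16" using perp_card[OF IS] cI by simp

lemma WpP: "Wp \<subseteq> perp I" and WmP: "Wm \<subseteq> perp I"
  using W_perpI[OF Wp IW(1)] W_perpI[OF Wm IW(2)] by auto

lemma VP: "V \<subseteq> perp I" using VAN Vb unfolding perp_def I_def by auto

lemma WpWm: "Wp \<inter> Wm = I"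
proof
  show "I \<subseteq> Wp \<inter> Wm" using IW by auto
  show "Wp \<inter> Wm \<subseteq> I"
  proof
    fix y assume y: "y \<in> Wp \<inter> Wm"
    show "y \<in> I"
    proof (rule ccontr)
      assume "y \<notin> I"
      have "Wp = I \<union> vadd y ` I" using W_decomp[OF IS cI Wp IW(1), of y] y \<open>y \<notin> I\<close> by blast
      moreover have "Wm = I \<union> vadd y ` I" using W_decomp[OF IS cI Wm IW(2), of y] y \<open>y \<notin> I\<close> by blast
      ultimately show False using ne by simp
    qed
  qed
qed

lemma perpI_eq: "perp I = (Wp \<union> Wm) \<union> vadd a0 ` I"
proof -
  have fP: "finite (perp I)" using sub_finite[OF perp_sub] .
  have fWp: "finite Wp" and fWm: "finite Wm" using sub_finite iso_S Wp Wm by auto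
  have c8: "card Wp = 8" "card Wm = 8" using Wp Wm unfolding max_tot_isotropic_def by auto
  have "card (Wp \<union> Wm) + card I = 16" using card_Un_Int[OF fWp fWm] WpWm c8 by simp
  hence cU: "card (Wp \<union> Wm) = 12" using cI by simp
  have d: "(Wp \<union> Wm) \<inter> vadd a0 ` I = {}" using a0I iso_q[OF Wp] iso_q[OF Wm] by auto
  have "card ((Wp \<union> Wm) \<union> vadd a0 ` I) = 16"
    using card_Un_disjoint[OF _ _ d] fWp fWm sub_finite[OF IS] cU card_image[OF inj_a0] cI by simp
  moreover have "(Wp \<union> Wm) \<union> vadd a0 ` I \<subseteq> perp I" using WpP WmP VP VI by auto
  ultimately show ?thesis using card_subset_eq[OF fP] cPI by metis
qed

lemma key0: "y \<in> perp I \<Longrightarrow> \<not> qN y \<Longrightarrow> y \<in> Wp \<or> y \<in> Wm"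
  using perpI_eq a0I by auto

lemma key1: "y \<in> perp I \<Longrightarrow> qN y \<Longrightarrow> y \<in> V"
  using perpI_eq iso_q[OF Wp] iso_q[OF Wm] VI by auto

lemma trans_gen:
  assumes WW: "(W = Wp \<and> W' = Wm) \<or> (W = Wm \<and> W' = Wp)"
    and a: "a \<in> V" "qN a" and x: "x \<in> W"
  shows "transvection a x \<in> W'"
proof -
  have W: "max_tot_isotropic W" "max_tot_isotropic W'" "W \<subseteq> perp I" "W \<inter> W' = I"
    using WW Wp Wm WpP WmP WpWm by auto
  have xP: "x \<in> perp I" using W(3) x by auto
  have aP: "a \<in> perp I" using VP a by auto
  have xaP: "vadd x a \<in> perp I" using sub_add[OF perp_sub xP aP] .
  have qx: "\<not> qN x" using iso_q[OF W(1) x] .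
  show ?thesis
  proof (cases "bN x a")
    case True
    hence q: "\<not> qN (vadd x a)" using qx a by (simp add: qN_add)
    have "vadd x a \<notin> W"
    proof
      assume "vadd x a \<in> W"
      hence "vadd x (vadd x a) \<in> W" by (rule sub_add[OF iso_S[OF W(1)] x])
      hence "a \<in> W" by simp
      thus False using iso_q[OF W(1)] a by simp
    qed
    hence "vadd x a \<in> W'" using key0[OF xaP q] WW by auto
    thus ?thesis using True by (simp add: transvection_def)
  next
    case False
    hence q: "qN (vadd x a)" using qx a by (simp add: qN_add)
    have "vadd x a \<in> V" using key1[OF xaP q] .
    hence "vadd (vadd x a) a \<in> V" using sub_add[OF VS _ a(1)] by blast
    hence "x \<in> I" using qx unfolding I_def by simp
    thus ?thesis using W(4) False by (auto simp: transvection_def)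
  qed
qed

lemma bN_W:
  assumes WW: "(W = Wp \<and> W' = Wm) \<or> (W = Wm \<and> W' = Wp)"
    and a: "a \<in> V" "qN a" and x: "x \<in> W" "x \<notin> I"
  shows "bN x a"
proof (rule ccontr)
  assume "\<not> bN x a"
  hence "x \<in> W'" using trans_gen[OF WW a x(1)] by (simp add: transvection_def)
  thus False using x WW WpWm by auto
qed

lemma fV_minus:
  assumes a: "a \<in> V" "qN a"
  shows "fV Wp Wm (transvection a x) = - fV Wp Wm x"
proof -
  have 1: "transvection a x \<in> Wp \<longleftrightarrow> x \<in> Wm"
    using trans_gen[of Wm Wp, OF _ a] trans_gen[of Wp Wm, OF _ a, of "transvection a x"] t_invol
    by metis
  have 2: "transvection a x \<in> Wm \<longleftrightarrow> x \<in> Wp"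
    using trans_gen[of Wp Wm, OF _ a] trans_gen[of Wm Wp, OF _ a, of "transvection a x"] t_invol
    by metis
  show ?thesis using 1 2 unfolding fV_def indic_def by auto
qed

lemma fV_CA: "fV Wp Wm \<in> CA"
  using iso_AN[OF Wp] iso_AN[OF Wm] unfolding CA_def fV_def indic_def by auto

lemma acts: "acts_as_minus_one V (fV Wp Wm)"
  unfolding acts_as_minus_one_def
proof (intro ballI impI ext)
  fix a x assume a: "a \<in> V" "qN a"
  have aA: "a \<in> AN" using a VAN by auto
  show "perm_act (transvection a) (fV Wp Wm) x = - fV Wp Wm x"
    using fV_minus[OF a] fV_CA unfolding perm_t[OF aA] CA_def by auto
qed

lemma S_fV: "weilS (fV Wp Wm) = fV Wp Wm"
proof
  fix b
  have "weilS (fV Wp Wm) b = weilS (indic Wp) b - weilS (indic Wm) b"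
    unfolding weilS_def fV_def by (simp add: sum_subtractf algebra_simps)
  thus "weilS (fV Wp Wm) b = fV Wp Wm b"
    using charsum_indic[OF Wp] charsum_indic[OF Wm] by (simp add: fV_def)
qed

lemma T_fV: "weilT (fV Wp Wm) = fV Wp Wm"
proof
  fix b
  show "weilT (fV Wp Wm) b = fV Wp Wm b"
    using fV_CA iso_q[OF Wp, of b] iso_q[OF Wm, of b]
    unfolding weilT_def CA_def fV_def indic_def sgn2_def by auto
qed

lemma invariant: "SL2Z_invariant (fV Wp Wm)"
  unfolding SL2Z_invariant_def
proof (intro conjI ballI fV_CA)
  fix g assume "g \<in> weil_image"
  thus "g (fV Wp Wm) = fV Wp Wm"
    by (induction rule: weil_image.induct) (auto simp: S_fV T_fV)
qed

lemma nonzero: "fV Wp Wm \<noteq> (\<lambda>x. 0)"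
proof
  assume h: "fV Wp Wm = (\<lambda>x. 0)"
  have "Wp = Wm"
  proof (rule set_eqI)
    fix x have "fV Wp Wm x = 0" using h by simp
    thus "x \<in> Wp \<longleftrightarrow> x \<in> Wm" unfolding fV_def indic_def by (auto split: if_splits)
  qed
  thus False using ne by simp
qed

lemma unique:
  assumes gC: "g \<in> CA" and gA: "acts_as_minus_one V g"
  shows "\<exists>c. g = (\<lambda>x. c * fV Wp Wm x)"
proof -
  have G: "g (transvection a x) = - g x" if "a \<in> V" "qN a" "x \<in> AN" for a x
  proof -
    have aA: "a \<in> AN" using that VAN by auto
    have "perm_act (transvection a) g x = - g x" using gA that unfolding acts_as_minus_one_def by metis
    thus ?thesis using that unfolding perm_t[OF aA] by simp
  qed
  have WpA: "Wp \<subseteq> AN" and WmA: "Wm \<subseteq> AN" using iso_AN Wp Wm by auto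
  obtain w0 where w0: "w0 \<in> Wp" "w0 \<notin> I"
  proof -
    have "Wp \<noteq> I" using cI Wp unfolding max_tot_isotropic_def by auto
    thus ?thesis using IW that by blast
  qed
  define c where "c = g w0"
  have bw0: "bN w0 a0" using bN_W[of Wp Wm, OF _ a0 w0] by simp
  have claim1: "g y = c" if y: "y \<in> Wp" "y \<notin> I" for y
  proof -
    have "y \<in> I \<union> vadd w0 ` I" using W_decomp[OF IS cI Wp IW(1) w0] y by simp
    then obtain i where i: "i \<in> I" "y = vadd w0 i" using y by auto
    have a: "vadd a0 i \<in> V" "qN (vadd a0 i)" using a0I[OF i(1)] by auto
    have "bN y (vadd a0 i)" using bN_W[of Wp Wm, OF _ a y] by simp
    hence t1: "transvection (vadd a0 i) y = vadd w0 a0"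
      unfolding transvection_def i(2) by (auto simp: vadd_def)
    have t2: "transvection a0 w0 = vadd w0 a0" using bw0 by (simp add: transvection_def)
    have "g y = - g (vadd w0 a0)" using G[OF a, of y] t1 y WpA by auto
    also have "\<dots> = g w0" using G[OF a0, of w0] t2 w0 WpA by auto
    finally show ?thesis unfolding c_def .
  qed
  have claim2: "g y = - c" if y: "y \<in> Wm" "y \<notin> I" for y
  proof -
    have b: "bN y a0" using bN_W[of Wm Wp, OF _ a0 y] by simp
    have "transvection a0 y \<in> Wp" using trans_gen[of Wm Wp, OF _ a0 y(1)] by simp
    hence ya: "vadd y a0 \<in> Wp" using b by (simp add: transvection_def)
    have "vadd y a0 \<notin> I"
    proof
      assume "vadd y a0 \<in> I"
      hence "vadd (vadd y a0) a0 \<in> V" using sub_add[OF VS _ a0(1)] unfolding I_def by blast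
      hence "y \<in> I" using iso_q[OF Wm y(1)] unfolding I_def by simp
      thus False using y by simp
    qed
    hence "g (vadd y a0) = c" using claim1 ya by simp
    moreover have "g (vadd y a0) = - g y" using G[OF a0, of y] b y WmA by (auto simp: transvection_def)
    ultimately show ?thesis by (metis minus_minus)
  qed
  have "g x = c * fV Wp Wm x" for x
  proof (cases "x \<in> AN")
    case False
    thus ?thesis using gC WpA WmA unfolding CA_def fV_def indic_def by auto
  next
    case xA: True
    show ?thesis
    proof (cases "\<exists>a\<in>V. qN a \<and> \<not> bN x a")
      case True
      then obtain a where a: "a \<in> V" "qN a" "\<not> bN x a" by auto
      have tx: "transvection a x = x" using a(3) by (simp add: transvection_def)
      have "g x = 0" using G[OF a(1,2) xA] tx by simp
      moreover have "fV Wp Wm x = 0" using fV_minus[OF a(1,2), of x] tx by simp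
      ultimately show ?thesis by simp
    next
      case False
      hence allb: "\<And>a. a \<in> V \<Longrightarrow> qN a \<Longrightarrow> bN x a" by auto
      have xP: "x \<in> perp I" unfolding perp_def
      proof (intro CollectI conjI ballI xA)
        fix i assume i: "i \<in> I"
        have "bN x (vadd a0 i)" using allb a0I[OF i] by auto
        moreover have "bN x a0" using allb a0 by auto
        ultimately show "\<not> bN x i" by (simp add: bN_add2)
      qed
      have qx: "\<not> qN x"
      proof
        assume "qN x"
        hence "x \<in> V" using key1[OF xP] by simp
        thus False using allb[of x] \<open>qN x\<close> by simp
      qed
      have xI: "x \<notin> I"
      proof
        assume "x \<in> I"
        hence "\<not> bN x a0" using Vb a0(1) unfolding I_def by auto
        thus False using allb a0 by auto
      qed
      from key0[OF xP qx] show ?thesis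
      proof
        assume "x \<in> Wp"
        moreover hence "x \<notin> Wm" using WpWm xI by auto
        ultimately show ?thesis using claim1 xI by (simp add: fV_def indic_def)
      next
        assume "x \<in> Wm"
        moreover hence "x \<notin> Wp" using WpWm xI by auto
        ultimately show ?thesis using claim2 xI by (simp add: fV_def indic_def)
      qed
    qed
  qed
  thus ?thesis by blast
qed

end

theorem theorem5p4:
  assumes V: "max_tot_singular V"
    and Wp: "max_tot_isotropic Wp" and Wm: "max_tot_isotropic Wm"
    and WpI: "{a\<in>V. \<not> qN a} \<subseteq> Wp" and WmI: "{a\<in>V. \<not> qN a} \<subseteq> Wm"
    and ne: "Wp \<noteq> Wm"
  shows "SL2Z_invariant (fV Wp Wm)
    \<and> fV Wp Wm \<noteq> (\<lambda>x. 0)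
    \<and> acts_as_minus_one V (fV Wp Wm)
    \<and> (\<forall>g\<in>CA. acts_as_minus_one V g \<longrightarrow> (\<exists>c::complex. g = (\<lambda>x. c * fV Wp Wm x)))"
proof -
  interpret cfg V Wp Wm using assms by unfold_locales
  show ?thesis using invariant nonzero acts unique by blast
qed


end
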